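(* Let $n$ be an even positive integer, let $V_0=\{v\in\{-1,1\}^n : v_1=1,\ \sum_i v_i=0\}$, let $L\subset\mathbb{Z}^n$ be the lattice generated by $V_0$, let $P(V_0)=\{\sum_{v\in W}v : W\subseteq V_0\}$, and let $g(V_0)=\frac12\sum_{v\in V_0}v$. Let $R$ be a positive integer such that $\binom{n-2}{(n-2)/2}>4R(n-1)$. Then every $u\in L$ with $\|u-g(V_0)\|_\infty\le R-\frac n2$ satisfies $u\in P(V_0)$. *)

theory Defs
  imports Complex_Main
begin

text \<open>Vectors in Z^n are modelled as functions nat => int, coordinate i (0-based,
  i < n) corresponds to coordinate i+1 of the paper; coordinates >= n are 0.\<close>

definition V0 :: "nat \<Rightarrow> (nat \<Rightarrow> int) set" where
  "V0 n = {v. (\<forall>i<n. v i \<in> {-1, 1}) \<and> (\<forall>i\<ge>n. v i = 0) \<and> v 0 = 1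
              \<and> (\<Sum>i<n. v i) = 0}"

definition lattice_V0 :: "nat \<Rightarrow> (nat \<Rightarrow> int) set" where
  "lattice_V0 n = {(\<lambda>i. \<Sum>v\<in>V0 n. c v * v i) | c :: (nat \<Rightarrow> int) \<Rightarrow> int. True}"

definition P_V0 :: "nat \<Rightarrow> (nat \<Rightarrow> int) set" where
  "P_V0 n = {(\<lambda>i. \<Sum>v\<in>W. v i) | W. W \<subseteq> V0 n}"

definition g_V0 :: "nat \<Rightarrow> nat \<Rightarrow> real" where
  "g_V0 n i = (1/2) * (\<Sum>v\<in>V0 n. real_of_int (v i))"

end

theory Submission
  imports Defs
begin

definition vec :: "nat \<Rightarrow> nat set \<Rightarrow> nat \<Rightarrow> int" where
  "vec n S k = (if k = 0 then 1 else if k < n then (if k \<in> S then 1 else -1) else 0)"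

lemma V0_D:
  assumes "v \<in> V0 n"
  shows "\<And>i. i < n \<Longrightarrow> v i = -1 \<or> v i = 1" "\<And>i. i \<ge> n \<Longrightarrow> v i = 0" "v 0 = 1"
    "(\<Sum>i<n. v i) = 0"
  using assms unfolding V0_def by auto

lemma V0_vec:
  assumes "v \<in> V0 n"
  shows "v = vec n {k\<in>{1..<n}. v k = 1}"
proof
  fix k show "v k = vec n {k \<in> {1..<n}. v k = 1} k"
  proof (cases "k = 0")
    case True then show ?thesis using V0_D(3)[OF assms] by (simp add: vec_def)
  next
    case False
    show ?thesis
    proof (cases "k < n")
      case True then show ?thesis using False V0_D(1)[OF assms, of k] by (auto simp: vec_def)
    next
      case F2: False then show ?thesis using False V0_D(2)[OF assms, of k] by (auto simp: vec_def)
    qed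
  qed
qed

lemma finite_V0: "finite (V0 n)"
proof -
  have "V0 n \<subseteq> vec n ` Pow {1..<n}"
  proof
    fix v assume "v \<in> V0 n"
    then have "v = vec n {k\<in>{1..<n}. v k = 1}" by (rule V0_vec)
    moreover have "{k\<in>{1..<n}. v k = 1} \<in> Pow {1..<n}" by auto
    ultimately show "v \<in> vec n ` Pow {1..<n}" by blast
  qed
  then show ?thesis by (rule finite_subset) auto
qed

lemma sum_vec:
  assumes "S \<subseteq> {1..<n}" "n > 0"
  shows "(\<Sum>k<n. vec n S k) = 2 * int (card S) + 2 - int n"
proof -
  have fS: "finite S" using assms finite_subset by blast
  have "{..<n} = insert 0 {1..<n}" using assms(2) by auto
  then have "(\<Sum>k<n. vec n S k) = 1 + (\<Sum>k\<in>{1..<n}. vec n S k)"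
    by (simp add: vec_def)
  also have "(\<Sum>k\<in>{1..<n}. vec n S k) = (\<Sum>k\<in>{1..<n}. if k \<in> S then 1 else -1)"
    by (rule sum.cong) (auto simp: vec_def)
  also have "\<dots> = (\<Sum>k\<in>{1..<n} \<inter> S. 1) + (\<Sum>k\<in>{1..<n} - S. -1)"
    by (simp add: sum.If_cases Diff_eq)
  also have "{1..<n} \<inter> S = S" using assms by auto
  also have "(\<Sum>k\<in>{1..<n} - S. (-1::int)) = - int (card ({1..<n} - S))" by simp
  also have "card ({1..<n} - S) = (n - 1) - card S"
    using assms by (simp add: card_Diff_subset fS)
  finally show ?thesis using card_mono[OF _ assms(1)] assms by simp
qed

lemma vec_in_V0:
  assumes "S \<subseteq> {1..<n}" "n > 0" "even n" "card S = n div 2 - 1"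
  shows "vec n S \<in> V0 n"
proof -
  have "(\<Sum>k<n. vec n S k) = 0" using sum_vec[OF assms(1,2)] assms(2-4)
    by (auto elim!: evenE)
  then show ?thesis unfolding V0_def using assms(2) by (auto simp: vec_def)
qed

lemma vec_inj:
  assumes "S \<subseteq> {1..<n}" "T \<subseteq> {1..<n}" "vec n S = vec n T"
  shows "S = T"
proof -
  have "S = {k\<in>{1..<n}. vec n S k = 1}" "T = {k\<in>{1..<n}. vec n T k = 1}"
    using assms(1,2) by (auto simp: vec_def)
  then show ?thesis using assms(3) by simp
qed

lemma card_pos_V0:
  assumes "v \<in> V0 n" "n > 0"
  shows "card {k\<in>{1..<n}. v k = 1} = n div 2 - 1"
proof -
  let ?S = "{k\<in>{1..<n}. v k = 1}"
  have "0 = (\<Sum>k<n. v k)" using V0_D[OF assms(1)] by simp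
  also have "\<dots> = (\<Sum>k<n. vec n ?S k)"
    using V0_vec[OF assms(1)] by metis
  also have "\<dots> = 2 * int (card ?S) + 2 - int n"
    by (rule sum_vec) (use assms(2) in auto)
  finally show ?thesis by linarith
qed

lemma count_V0:
  assumes "even n" "n > 0" "P \<subseteq> {1..<n}" "Q \<subseteq> {1..<n}" "P \<inter> Q = {}"
    "card P \<le> n div 2 - 1"
  shows "card {v\<in>V0 n. (\<forall>p\<in>P. v p = 1) \<and> (\<forall>q\<in>Q. v q = -1)}
       = card ({1..<n} - P - Q) choose (n div 2 - 1 - card P)"
proof -
  let ?U = "{1..<n} - P - Q"
  let ?k = "n div 2 - 1 - card P"
  let ?F = "{T. T \<subseteq> ?U \<and> card T = ?k}"
  have fP: "finite P" using assms(3) finite_subset by blast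
  have eq: "{v\<in>V0 n. (\<forall>p\<in>P. v p = 1) \<and> (\<forall>q\<in>Q. v q = -1)} = (\<lambda>T. vec n (P \<union> T)) ` ?F"
  proof
    show "(\<lambda>T. vec n (P \<union> T)) ` ?F \<subseteq> {v\<in>V0 n. (\<forall>p\<in>P. v p = 1) \<and> (\<forall>q\<in>Q. v q = -1)}"
    proof
      fix w assume "w \<in> (\<lambda>T. vec n (P \<union> T)) ` ?F"
      then obtain T where T: "T \<subseteq> ?U" "card T = ?k" and w: "w = vec n (P \<union> T)" by blast
      have fT: "finite T" using T(1) finite_subset by blast
      have "card (P \<union> T) = card P + card T"
        using T(1) fP fT by (intro card_Un_disjoint) auto
      then have c: "card (P \<union> T) = n div 2 - 1" using T(2) assms(6) by linarith
      have "w \<in> V0 n" unfolding w using assms(1,2,3) T(1) c by (intro vec_in_V0) auto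
      moreover have "\<forall>p\<in>P. w p = 1" using assms(3) unfolding w vec_def by auto
      moreover have "\<forall>q\<in>Q. w q = -1" using assms(4,5) T(1) unfolding w vec_def by auto
      ultimately show "w \<in> {v\<in>V0 n. (\<forall>p\<in>P. v p = 1) \<and> (\<forall>q\<in>Q. v q = -1)}" by blast
    qed
  next
    show "{v\<in>V0 n. (\<forall>p\<in>P. v p = 1) \<and> (\<forall>q\<in>Q. v q = -1)} \<subseteq> (\<lambda>T. vec n (P \<union> T)) ` ?F"
    proof
      fix v assume v: "v \<in> {v\<in>V0 n. (\<forall>p\<in>P. v p = 1) \<and> (\<forall>q\<in>Q. v q = -1)}"
      let ?S = "{k\<in>{1..<n}. v k = 1}"
      have vV: "v \<in> V0 n" using v by blast
      have PS: "P \<subseteq> ?S" using v assms(3) by auto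
      have cS: "card ?S = n div 2 - 1" using card_pos_V0[OF vV assms(2)] .
      have "P \<union> (?S - P) = ?S" using PS by blast
      then have veq: "v = vec n (P \<union> (?S - P))" using V0_vec[OF vV] by simp
      have sub: "?S - P \<subseteq> ?U" using v by force
      have "card (?S - P) = ?k" using cS PS fP by (simp add: card_Diff_subset)
      then show "v \<in> (\<lambda>T. vec n (P \<union> T)) ` ?F" using veq sub by blast
    qed
  qed
  have inj: "inj_on (\<lambda>T. vec n (P \<union> T)) ?F"
  proof
    fix T1 T2 assume T1: "T1 \<in> ?F" and T2: "T2 \<in> ?F" and e: "vec n (P \<union> T1) = vec n (P \<union> T2)"
    have "P \<union> T1 = P \<union> T2" using vec_inj[OF _ _ e] T1 T2 assms(3) by blast
    then show "T1 = T2" using T1 T2 by blast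
  qed
  show ?thesis unfolding eq card_image[OF inj] by (rule n_subsets) simp
qed

definition ss :: "(nat \<Rightarrow> int) set \<Rightarrow> nat \<Rightarrow> int" where
  "ss W i = (\<Sum>v\<in>W. v i)"

definition sw :: "nat \<Rightarrow> nat \<Rightarrow> nat \<Rightarrow> nat" where
  "sw i j k = (if k = i then j else if k = j then i else k)"

lemma sw_sw: "sw i j (sw i j k) = k" by (auto simp: sw_def)

lemma comp_sw_sw: "(v \<circ> sw i j) \<circ> sw i j = v" by (auto simp: sw_sw)

lemma swp_V0:
  assumes "v \<in> V0 n" "i \<in> {1..<n}" "j \<in> {1..<n}"
  shows "v \<circ> sw i j \<in> V0 n"
proof -
  have im: "sw i j ` {..<n} = {..<n}"
  proof
    show "sw i j ` {..<n} \<subseteq> {..<n}" using assms(2,3) by (auto simp: sw_def)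
    show "{..<n} \<subseteq> sw i j ` {..<n}"
    proof
      fix k assume "k \<in> {..<n}"
      moreover have "sw i j k \<in> {..<n}" using \<open>k \<in> {..<n}\<close> assms(2,3) by (auto simp: sw_def)
      ultimately show "k \<in> sw i j ` {..<n}" using sw_sw[of i j k] by (metis image_eqI)
    qed
  qed
  have inj: "inj_on (sw i j) {..<n}"
  proof (rule inj_onI)
    fix a b assume "sw i j a = sw i j b"
    then have "sw i j (sw i j a) = sw i j (sw i j b)" by simp
    then show "a = b" by (simp only: sw_sw)
  qed
  have "(\<Sum>k<n. (v \<circ> sw i j) k) = (\<Sum>k\<in>sw i j ` {..<n}. v k)"
    by (rule sum.reindex[OF inj, symmetric])
  also have "\<dots> = 0" using im V0_D(4)[OF assms(1)] by simp
  finally have s: "(\<Sum>k<n. (v \<circ> sw i j) k) = 0" .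
  have a: "\<And>k. k < n \<Longrightarrow> sw i j k < n" using assms(2,3) by (auto simp: sw_def)
  have b: "\<And>k. k \<ge> n \<Longrightarrow> sw i j k = k" using assms(2,3) by (auto simp: sw_def)
  have c: "sw i j 0 = 0" using assms(2,3) by (auto simp: sw_def)
  show ?thesis unfolding V0_def using s a b c V0_D[OF assms(1)] by auto
qed

lemma swap_exists:
  assumes "finite W" "W \<subseteq> V0 n" "i \<in> {1..<n}" "j \<in> {1..<n}" "i \<noteq> j" "ss W i > ss W j"
  shows "\<exists>v\<in>W. v i = 1 \<and> v j = -1 \<and> v \<circ> sw i j \<notin> W"
proof (rule ccontr)
  assume H: "\<not> ?thesis"
  let ?A1 = "{v\<in>W. v i = 1 \<and> v j = -1}"
  let ?A2 = "{v\<in>W. v i = -1 \<and> v j = 1}"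
  have swi: "sw i j i = j" "sw i j j = i" by (auto simp: sw_def)
  have "(\<lambda>v. v \<circ> sw i j) ` ?A1 \<subseteq> ?A2"
  proof
    fix w assume "w \<in> (\<lambda>v. v \<circ> sw i j) ` ?A1"
    then obtain v where v: "v \<in> ?A1" "w = v \<circ> sw i j" by blast
    then have "v \<circ> sw i j \<in> W" using H by blast
    then show "w \<in> ?A2" using v swi by simp
  qed
  moreover have "inj_on (\<lambda>v. v \<circ> sw i j) ?A1"
  proof (rule inj_onI)
    fix a b assume "a \<circ> sw i j = b \<circ> sw i j"
    then have "(a \<circ> sw i j) \<circ> sw i j = (b \<circ> sw i j) \<circ> sw i j" by simp
    then show "a = b" by (simp only: comp_sw_sw)
  qed
  ultimately have le: "card ?A1 \<le> card ?A2"
    using assms(1) by (intro card_inj_on_le) auto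
  have pm: "\<And>v k. v \<in> W \<Longrightarrow> k \<in> {1..<n} \<Longrightarrow> v k = -1 \<or> v k = 1"
  proof -
    fix v k assume "v \<in> W" "k \<in> {1..<n}"
    then show "v k = -1 \<or> v k = 1" using V0_D(1)[of v n k] assms(2) by auto
  qed
  have "ss W i - ss W j = (\<Sum>v\<in>W. v i - v j)" unfolding ss_def by (simp add: sum_subtractf)
  also have "\<dots> = (\<Sum>v\<in>W. (if v \<in> ?A1 then 2 else 0) - (if v \<in> ?A2 then 2 else 0))"
  proof (rule sum.cong)
    fix v assume "v \<in> W"
    then show "v i - v j = (if v \<in> ?A1 then 2 else 0) - (if v \<in> ?A2 then 2 else 0)"
      using pm[of v i] pm[of v j] assms(3,4) by auto
  qed simp
  also have "\<dots> = (\<Sum>v\<in>W. if v \<in> ?A1 then 2 else 0) - (\<Sum>v\<in>W. if v \<in> ?A2 then 2 else 0)"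
    by (simp add: sum_subtractf)
  also have "(\<Sum>v\<in>W. if v \<in> ?A1 then 2 else 0) = (\<Sum>v\<in>?A1. (2::int))"
    using assms(1) by (simp add: sum.inter_filter[symmetric])
  also have "(\<Sum>v\<in>W. if v \<in> ?A2 then 2 else 0) = (\<Sum>v\<in>?A2. (2::int))"
    using assms(1) by (simp add: sum.inter_filter[symmetric])
  finally have "ss W i - ss W j = 2 * int (card ?A1) - 2 * int (card ?A2)" by simp
  then show False using le assms(6) by linarith
qed

lemma ss_0: assumes "W \<subseteq> V0 n" shows "ss W 0 = int (card W)"
proof -
  have "(\<Sum>v\<in>W. v 0) = (\<Sum>v\<in>W. (1::int))"
    by (rule sum.cong) (use assms V0_D(3) in auto)
  then show ?thesis unfolding ss_def by simp
qed

lemma ss_ge: assumes "W \<subseteq> V0 n" "i \<ge> n" shows "ss W i = 0"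
proof -
  have "(\<Sum>v\<in>W. v i) = (\<Sum>v\<in>W. (0::int))"
    by (rule sum.cong) (use assms V0_D(2) in auto)
  then show ?thesis unfolding ss_def by simp
qed

lemma ss_sum: "W \<subseteq> V0 n \<Longrightarrow> (\<Sum>i<n. ss W i) = 0"
  unfolding ss_def
  by (subst sum.swap) (simp add: V0_D(4) subset_iff)

lemma ss_par:
  assumes "finite W" "W \<subseteq> V0 n" "i \<in> {1..<n}"
  shows "even (ss W i + int (card W))"
proof -
  have "ss W i + int (card W) = (\<Sum>v\<in>W. v i + 1)" unfolding ss_def by (simp add: sum.distrib)
  moreover have "\<forall>v\<in>W. even (v i + 1)"
  proof
    fix v assume "v \<in> W"
    then have "v i = -1 \<or> v i = 1" using V0_D(1)[of v n i] assms(2,3) by auto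
    then show "even (v i + 1)" by auto
  qed
  ultimately show ?thesis by (simp add: dvd_sum)
qed

lemma ss_swap:
  assumes "finite W" "v \<in> W" "w \<notin> W"
  shows "ss (insert w (W - {v})) k = ss W k - v k + w k"
proof -
  have "w \<notin> W - {v}" using assms(3) by blast
  then have "ss (insert w (W - {v})) k = w k + (\<Sum>x\<in>W - {v}. x k)"
    unfolding ss_def using assms(1) by simp
  also have "(\<Sum>x\<in>W - {v}. x k) = ss W k - v k"
    unfolding ss_def using assms(1,2) by (simp add: sum_diff1)
  finally show ?thesis by simp
qed

lemma greedy:
  assumes n0: "n > 0" and x0: "x0 \<in> {1..<n}" and umax: "\<forall>j\<in>{1..<n}. u j \<le> u x0"
    and usum: "(\<Sum>i<n. u i) = 0" and uge: "\<forall>i\<ge>n. u i = 0"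
    and upar: "\<forall>i\<in>{1..<n}. even (u i + u 0)"
  shows "finite W \<Longrightarrow> W \<subseteq> V0 n \<Longrightarrow> int (card W) = u 0 \<Longrightarrow>
     (\<forall>i\<in>{1..<n}. i \<noteq> x0 \<longrightarrow> ss W i \<le> u i) \<Longrightarrow> u \<in> P_V0 n"
proof (induction "nat (\<Sum>i<n. \<bar>ss W i - u i\<bar>)" arbitrary: W rule: less_induct)
  case less
  note fin = less.prems(1) and sub = less.prems(2) and cardW = less.prems(3) and inv = less.prems(4)
  have s0: "ss W 0 = u 0" using ss_0[OF sub] cardW by simp
  show ?case
  proof (cases "\<forall>i<n. ss W i = u i")
    case True
    have "u = ss W"
    proof
      fix i show "u i = ss W i"
        using True ss_ge[OF sub, of i] uge by (cases "i < n") auto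
    qed
    then show ?thesis unfolding P_V0_def ss_def using sub by blast
  next
    case False
    then obtain i0 where i0: "i0 < n" "ss W i0 \<noteq> u i0" by blast
    have le_all: "\<forall>i<n. i \<noteq> x0 \<longrightarrow> ss W i \<le> u i"
      using inv s0 by (metis atLeastLessThan_iff less_one linorder_not_le order.refl)
    have gx0: "ss W x0 > u x0"
    proof (rule ccontr)
      assume "\<not> ss W x0 > u x0"
      then have all: "\<forall>i\<in>{..<n}. ss W i \<le> u i" using le_all by auto
      have "ss W i0 < u i0" using all i0 by force
      then have "(\<Sum>i<n. ss W i) < (\<Sum>i<n. u i)"
        using all i0 by (intro sum_strict_mono_ex1) auto
      then show False using ss_sum[OF sub] usum by simp
    qed
    obtain j where j: "j < n" "ss W j < u j"
    proof (rule ccontr)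
      assume "\<not> thesis"
      then have all: "\<forall>i\<in>{..<n}. u i \<le> ss W i" using that by force
      have "(\<Sum>i<n. u i) < (\<Sum>i<n. ss W i)"
        using all gx0 x0 by (intro sum_strict_mono_ex1) auto
      then show False using ss_sum[OF sub] usum by simp
    qed
    have jx: "j \<noteq> 0" "j \<noteq> x0"
    proof
      assume "j = 0" then show False using j(2) s0 by simp
    next
      show "j \<noteq> x0" using j gx0 by auto
    qed
    then have j1: "j \<in> {1..<n}" using j by auto
    have e1: "even (ss W x0 - u x0)"
    proof -
      have "even ((ss W x0 + int (card W)) - (u x0 + u 0))"
        using ss_par[OF fin sub x0] upar x0 by simp
      then show ?thesis using cardW by simp
    qed
    have e2: "even (ss W j - u j)"
    proof -
      have "even ((ss W j + int (card W)) - (u j + u 0))"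
        using ss_par[OF fin sub j1] upar j1 by simp
      then show ?thesis using cardW by simp
    qed
    have g2: "ss W x0 \<ge> u x0 + 2" using gx0 e1 by presburger
    have l2: "ss W j \<le> u j - 2" using j(2) e2 by presburger
    have "ss W x0 > ss W j" using g2 l2 umax j1 by force
    then obtain v where v: "v \<in> W" "v x0 = 1" "v j = -1" "v \<circ> sw x0 j \<notin> W"
      using swap_exists[OF fin sub x0 j1] jx by metis
    define w where "w = v \<circ> sw x0 j"
    define W' where "W' = insert w (W - {v})"
    have wn: "w \<notin> W" using v(4) w_def by simp
    have fin': "finite W'" unfolding W'_def using fin by simp
    have wV: "w \<in> V0 n" unfolding w_def using swp_V0[of v n x0 j] v(1) sub x0 j1 by auto
    have sub': "W' \<subseteq> V0 n" unfolding W'_def using sub wV by auto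
    have card': "int (card W') = u 0"
    proof -
      have "card W' = Suc (card (W - {v}))" unfolding W'_def using wn fin by simp
      also have "\<dots> = card W" using v(1) fin by (metis card_Suc_Diff1)
      finally show ?thesis using cardW by simp
    qed
    have wk: "\<And>k. w k = (if k = x0 then v j else if k = j then v x0 else v k)"
      unfolding w_def sw_def by auto
    have ssk: "\<And>k. ss W' k = ss W k - v k + w k" unfolding W'_def using ss_swap[OF fin v(1) wn] .
    have ssx0: "ss W' x0 = ss W x0 - 2" using ssk[of x0] wk[of x0] v by simp
    have ssj: "ss W' j = ss W j + 2" using ssk[of j] wk[of j] v jx by simp
    have ssot: "\<And>k. k \<noteq> x0 \<Longrightarrow> k \<noteq> j \<Longrightarrow> ss W' k = ss W k" using ssk wk by simp
    have inv': "\<forall>i\<in>{1..<n}. i \<noteq> x0 \<longrightarrow> ss W' i \<le> u i"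
    proof (intro ballI impI)
      fix i assume i: "i \<in> {1..<n}" "i \<noteq> x0"
      show "ss W' i \<le> u i"
      proof (cases "i = j")
        case True then show ?thesis using ssj l2 by simp
      next
        case False then show ?thesis using ssot[OF i(2) False] inv i by simp
      qed
    qed
    have "(\<Sum>i<n. \<bar>ss W' i - u i\<bar>) < (\<Sum>i<n. \<bar>ss W i - u i\<bar>)"
    proof (rule sum_strict_mono_ex1)
      show "\<forall>i\<in>{..<n}. \<bar>ss W' i - u i\<bar> \<le> \<bar>ss W i - u i\<bar>"
      proof
        fix i assume "i \<in> {..<n}"
        show "\<bar>ss W' i - u i\<bar> \<le> \<bar>ss W i - u i\<bar>"
        proof (cases "i = x0")
          case True then show ?thesis using ssx0 g2 by simp
        next
          case False
          show ?thesis
          proof (cases "i = j")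
            case True then show ?thesis using ssj l2 by simp
          next
            case F2: False then show ?thesis using ssot[OF False F2] by simp
          qed
        qed
      qed
      show "\<exists>a\<in>{..<n}. \<bar>ss W' a - u a\<bar> < \<bar>ss W a - u a\<bar>"
        using ssx0 g2 x0 by (intro bexI[of _ x0]) auto
    qed simp
    moreover have "0 \<le> (\<Sum>i<n. \<bar>ss W' i - u i\<bar>)" by (simp add: sum_nonneg)
    ultimately have lt: "nat (\<Sum>i<n. \<bar>ss W' i - u i\<bar>) < nat (\<Sum>i<n. \<bar>ss W i - u i\<bar>)"
      by linarith
    show ?thesis using less.hyps[OF lt fin' sub' card' inv'] .
  qed
qed

definition cp :: "nat \<Rightarrow> (nat \<Rightarrow> int) \<Rightarrow> nat \<Rightarrow> int" where
  "cp x0 v k = (if k = 0 \<or> k = x0 then v k else - v k)"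

lemma cp_cp: "cp x0 (cp x0 v) = v" by (auto simp: cp_def)

lemma cp_V0:
  assumes "v \<in> V0 n" "x0 \<in> {1..<n}" "v x0 = -1"
  shows "cp x0 v \<in> V0 n"
proof -
  have "(\<Sum>k<n. cp x0 v k) + (\<Sum>k<n. v k) = (\<Sum>k<n. cp x0 v k + v k)" by (simp add: sum.distrib)
  also have "\<dots> = (\<Sum>k<n. (if k = 0 then 2 * v k else 0) + (if k = x0 then 2 * v k else 0))"
    by (rule sum.cong) (use assms(2) in \<open>auto simp: cp_def\<close>)
  also have "\<dots> = 2 * v 0 + 2 * v x0" using assms(2) by (simp add: sum.distrib)
  also have "\<dots> = 0" using assms(3) V0_D(3)[OF assms(1)] by simp
  finally have "(\<Sum>k<n. cp x0 v k) = 0" using V0_D(4)[OF assms(1)] by simp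
  then show ?thesis using V0_D[OF assms(1)] assms(2) unfolding V0_def cp_def by auto
qed

lemma cp_ne:
  assumes "v \<in> V0 n" "i \<in> {1..<n}" "i \<noteq> x0"
  shows "cp x0 v \<noteq> v"
proof
  assume "cp x0 v = v"
  then have "cp x0 v i = v i" by simp
  then have "v i = 0" using assms(2,3) by (simp add: cp_def)
  then show False using V0_D(1)[OF assms(1), of i] assms(2) by auto
qed

lemma pairs:
  assumes "finite C" "\<forall>v\<in>C. cp x0 v \<in> C \<and> cp x0 v \<noteq> v"
  shows "2 * c \<le> card C \<Longrightarrow> \<exists>Q\<subseteq>C. (\<forall>v\<in>Q. cp x0 v \<in> Q) \<and> card Q = 2 * c"
proof (induction c)
  case 0 then show ?case by (intro exI[of _ "{}"]) auto
next
  case (Suc c)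
  then obtain Q where Q: "Q \<subseteq> C" "\<forall>v\<in>Q. cp x0 v \<in> Q" "card Q = 2 * c" by auto
  have fQ: "finite Q" using Q(1) assms(1) finite_subset by blast
  have "card Q < card C" using Q(3) Suc.prems by simp
  then have "\<not> C \<subseteq> Q" using card_mono[OF fQ, of C] by linarith
  then obtain v where v: "v \<in> C" "v \<notin> Q" by blast
  have cv: "cp x0 v \<in> C" "cp x0 v \<noteq> v" using assms(2) v(1) by auto
  have cq: "cp x0 v \<notin> Q"
  proof
    assume "cp x0 v \<in> Q"
    then have "cp x0 (cp x0 v) \<in> Q" using Q(2) by blast
    then show False using v(2) by (simp add: cp_cp)
  qed
  let ?Q = "insert v (insert (cp x0 v) Q)"
  have "card ?Q = 2 * Suc c" using fQ v(2) cq cv(2) Q(3) by simp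
  moreover have "?Q \<subseteq> C" using Q(1) v(1) cv(1) by auto
  moreover have "\<forall>w\<in>?Q. cp x0 w \<in> ?Q" using Q(2) cp_cp by auto
  ultimately show ?case by blast
qed

lemma ss_closed:
  assumes "finite Q" "\<forall>v\<in>Q. cp x0 v \<in> Q" "k \<noteq> 0" "k \<noteq> x0"
  shows "ss Q k = 0"
proof -
  have inj: "inj_on (cp x0) Q"
  proof (rule inj_onI)
    fix a b assume "cp x0 a = cp x0 b"
    then have "cp x0 (cp x0 a) = cp x0 (cp x0 b)" by simp
    then show "a = b" by (simp add: cp_cp)
  qed
  have im: "cp x0 ` Q = Q"
  proof
    show "cp x0 ` Q \<subseteq> Q" using assms(2) by auto
    show "Q \<subseteq> cp x0 ` Q"
    proof
      fix v assume "v \<in> Q"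
      then have "cp x0 v \<in> Q" using assms(2) by blast
      then show "v \<in> cp x0 ` Q" using cp_cp[of x0 v] by (intro rev_image_eqI[of "cp x0 v"]) auto
    qed
  qed
  have "ss Q k = (\<Sum>v\<in>cp x0 ` Q. v k)" unfolding ss_def using im by simp
  also have "\<dots> = (\<Sum>v\<in>Q. cp x0 v k)" using sum.reindex[OF inj, of "\<lambda>v. v k"] by simp
  also have "\<dots> = (\<Sum>v\<in>Q. - v k)" using assms(3,4) by (simp add: cp_def)
  also have "\<dots> = - ss Q k" unfolding ss_def by (simp add: sum_negf)
  finally show ?thesis by simp
qed

lemma ss_union:
  assumes "finite A" "finite B" "A \<inter> B = {}"
  shows "ss (A \<union> B) k = ss A k + ss B k"
  unfolding ss_def using assms by (simp add: sum.union_disjoint)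

lemma counts:
  assumes "even n" "n > 0" "n div 2 \<ge> 3" "x0 \<in> {1..<n}" "i \<in> {1..<n}" "i \<noteq> x0"
  shows "card {v\<in>V0 n. v x0 = 1 \<and> v i = -1} = (n - 3) choose (n div 2 - 2)"
    "card {v\<in>V0 n. v x0 = 1 \<and> v i = 1} = (n - 3) choose (n div 2 - 3)"
proof -
  have c3: "card ({1..<n} - {x0} - {i}) = n - 3" using assms(4,5,6) by (simp add: card_Diff_singleton_if)
  have "{1..<n} - {x0, i} - {} = {1..<n} - {x0} - {i}" by auto
  then have c3': "card ({1..<n} - {x0, i} - {}) = n - 3" using c3 by simp
  have s1: "{v\<in>V0 n. (\<forall>p\<in>{x0}. v p = 1) \<and> (\<forall>q\<in>{i}. v q = -1)} = {v\<in>V0 n. v x0 = 1 \<and> v i = -1}"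
    by simp
  have e1: "n div 2 - 1 - card {x0} = n div 2 - 2" by simp
  have "card {v\<in>V0 n. (\<forall>p\<in>{x0}. v p = 1) \<and> (\<forall>q\<in>{i}. v q = -1)}
       = card ({1..<n} - {x0} - {i}) choose (n div 2 - 1 - card {x0})"
    using assms by (intro count_V0) auto
  then show "card {v\<in>V0 n. v x0 = 1 \<and> v i = -1} = (n - 3) choose (n div 2 - 2)"
    by (simp only: c3 e1 s1)
  have s2: "{v\<in>V0 n. (\<forall>p\<in>{x0, i}. v p = 1) \<and> (\<forall>q\<in>{}. v q = -1)} = {v\<in>V0 n. v x0 = 1 \<and> v i = 1}"
    by simp
  have e2: "n div 2 - 1 - card {x0, i} = n div 2 - 3" using assms(6) by simp
  have "card {v\<in>V0 n. (\<forall>p\<in>{x0, i}. v p = 1) \<and> (\<forall>q\<in>{}. v q = -1)}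
       = card ({1..<n} - {x0, i} - {}) choose (n div 2 - 1 - card {x0, i})"
    using assms by (intro count_V0) auto
  then show "card {v\<in>V0 n. v x0 = 1 \<and> v i = 1} = (n - 3) choose (n div 2 - 3)"
    by (simp only: c3' e2 s2)
qed

lemma ss_le_card:
  assumes "finite E" "E \<subseteq> V0 n" "i \<in> {1..<n}"
  shows "ss E i \<le> int (card E)"
proof -
  have "ss E i \<le> (\<Sum>v\<in>E. (1::int))" unfolding ss_def
  proof (rule sum_mono)
    fix v assume "v \<in> E"
    then have "v \<in> V0 n" using assms(2) by blast
    then show "v i \<le> 1" using V0_D(1)[of v n i] assms(3) by auto
  qed
  then show ?thesis by simp
qed

lemma base:
  fixes n :: nat and u :: "nat \<Rightarrow> int" and \<rho> :: real and x0 :: nat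
  assumes ev: "even n" and n0: "n > 0" and m3: "n div 2 \<ge> 3" and x0: "x0 \<in> {1..<n}"
    and box: "\<forall>i<n. \<bar>real_of_int (u i) - g_V0 n i\<bar> \<le> \<rho>"
    and gap: "2 * \<rho> + 2 \<le> real ((n-3) choose (n div 2 - 2)) - real ((n-3) choose (n div 2 - 3))"
  shows "\<exists>W. finite W \<and> W \<subseteq> V0 n \<and> int (card W) = u 0 \<and> (\<forall>i\<in>{1..<n}. i \<noteq> x0 \<longrightarrow> ss W i \<le> u i)"
proof -
  define A where "A = (n-3) choose (n div 2 - 2)"
  define D where "D = (n-3) choose (n div 2 - 3)"
  define Star where "Star = {v\<in>V0 n. v x0 = 1}"
  define Co where "Co = {v\<in>V0 n. v x0 = -1}"
  define i1 where "i1 = (if x0 = 1 then 2 else (1::nat))"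
  have i1: "i1 \<in> {1..<n}" "i1 \<noteq> x0" unfolding i1_def using m3 by auto
  have finV: "finite (V0 n)" by (rule finite_V0)
  have fS: "finite Star" unfolding Star_def using finV by simp
  have fC: "finite Co" unfolding Co_def using finV by simp
  have V0eq: "V0 n = Star \<union> Co"
  proof
    show "V0 n \<subseteq> Star \<union> Co"
    proof
      fix v assume "v \<in> V0 n"
      then show "v \<in> Star \<union> Co" using V0_D(1)[of v n x0] x0 unfolding Star_def Co_def by auto
    qed
  qed (auto simp: Star_def Co_def)
  have disj: "Star \<inter> Co = {}" unfolding Star_def Co_def by auto
  have SV: "Star \<subseteq> V0 n" "Co \<subseteq> V0 n" unfolding Star_def Co_def by auto
  have split: "Star = {v\<in>V0 n. v x0 = 1 \<and> v i = -1} \<union> {v\<in>V0 n. v x0 = 1 \<and> v i = 1}"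
    if "i \<in> {1..<n}" for i
  proof
    show "Star \<subseteq> {v\<in>V0 n. v x0 = 1 \<and> v i = -1} \<union> {v\<in>V0 n. v x0 = 1 \<and> v i = 1}"
    proof
      fix v assume "v \<in> Star"
      then show "v \<in> {v\<in>V0 n. v x0 = 1 \<and> v i = -1} \<union> {v\<in>V0 n. v x0 = 1 \<and> v i = 1}"
        using V0_D(1)[of v n i] that unfolding Star_def by auto
    qed
  qed (auto simp: Star_def)
  have cntA: "card {v\<in>V0 n. v x0 = 1 \<and> v i = -1} = A" and cntD: "card {v\<in>V0 n. v x0 = 1 \<and> v i = 1} = D"
    if "i \<in> {1..<n}" "i \<noteq> x0" for i
    using counts[OF ev n0 m3 x0 that] unfolding A_def D_def by auto
  have cardS: "card Star = A + D"
  proof -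
    have "card Star = card {v\<in>V0 n. v x0 = 1 \<and> v i1 = -1} + card {v\<in>V0 n. v x0 = 1 \<and> v i1 = 1}"
      using split[OF i1(1)] finV by (subst card_Un_disjoint[symmetric]) auto
    then show ?thesis using cntA[OF i1] cntD[OF i1] by simp
  qed
  have ssS: "ss Star i = int D - int A" if "i \<in> {1..<n}" "i \<noteq> x0" for i
  proof -
    let ?SA = "{v\<in>V0 n. v x0 = 1 \<and> v i = -1}" and ?SD = "{v\<in>V0 n. v x0 = 1 \<and> v i = 1}"
    have "ss Star i = ss (?SA \<union> ?SD) i" using split[OF that(1)] by simp
    also have "\<dots> = ss ?SA i + ss ?SD i" by (rule ss_union) (use finV in auto)
    also have "ss ?SA i = (\<Sum>v\<in>?SA. (-1::int))" unfolding ss_def by (rule sum.cong) auto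
    also have "ss ?SD i = (\<Sum>v\<in>?SD. (1::int))" unfolding ss_def by (rule sum.cong) auto
    finally show ?thesis using cntA[OF that] cntD[OF that] by simp
  qed
  have Cocl: "\<forall>v\<in>Co. cp x0 v \<in> Co \<and> cp x0 v \<noteq> v"
  proof
    fix v assume v: "v \<in> Co"
    then have "cp x0 v \<in> V0 n" using cp_V0[of v n x0] x0 unfolding Co_def by auto
    moreover have "cp x0 v x0 = -1" using v unfolding Co_def cp_def by auto
    moreover have "cp x0 v \<noteq> v" using cp_ne[of v n i1 x0] v i1 unfolding Co_def by auto
    ultimately show "cp x0 v \<in> Co \<and> cp x0 v \<noteq> v" unfolding Co_def by auto
  qed
  have ssC: "ss Co i = 0" if "i \<noteq> 0" "i \<noteq> x0" for i
    using ss_closed[OF fC _ that] Cocl by blast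
  have cardC: "2 * A \<le> card Co"
  proof -
    let ?C1 = "{v\<in>Co. v i1 = 1}" and ?C2 = "{v\<in>Co. v i1 = -1}"
    let ?SA = "{v\<in>V0 n. v x0 = 1 \<and> v i1 = -1}"
    have "(\<lambda>v. v \<circ> sw x0 i1) ` ?SA \<subseteq> ?C1"
    proof
      fix w assume "w \<in> (\<lambda>v. v \<circ> sw x0 i1) ` ?SA"
      then obtain v where v: "v \<in> ?SA" "w = v \<circ> sw x0 i1" by blast
      have "w \<in> V0 n" using swp_V0[of v n x0 i1] v x0 i1 by auto
      moreover have "w x0 = -1" "w i1 = 1" using v by (auto simp: sw_def)
      ultimately show "w \<in> ?C1" unfolding Co_def by auto
    qed
    moreover have "inj_on (\<lambda>v. v \<circ> sw x0 i1) ?SA"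
    proof (rule inj_onI)
      fix a b assume "a \<circ> sw x0 i1 = b \<circ> sw x0 i1"
      then have "(a \<circ> sw x0 i1) \<circ> sw x0 i1 = (b \<circ> sw x0 i1) \<circ> sw x0 i1" by simp
      then show "a = b" by (simp only: comp_sw_sw)
    qed
    ultimately have l1: "card ?SA \<le> card ?C1" using fC by (intro card_inj_on_le) auto
    have "cp x0 ` ?C1 \<subseteq> ?C2" using Cocl i1 by (auto simp: cp_def)
    moreover have "inj_on (cp x0) ?C1"
    proof (rule inj_onI)
      fix a b assume "cp x0 a = cp x0 b"
      then have "cp x0 (cp x0 a) = cp x0 (cp x0 b)" by simp
      then show "a = b" by (simp add: cp_cp)
    qed
    ultimately have l2: "card ?C1 \<le> card ?C2" using fC by (intro card_inj_on_le) auto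
    have "card (?C1 \<union> ?C2) = card ?C1 + card ?C2" using fC by (intro card_Un_disjoint) auto
    moreover have "card (?C1 \<union> ?C2) \<le> card Co" using fC by (intro card_mono) auto
    ultimately show ?thesis using l1 l2 cntA[OF i1] by simp
  qed
  have cardV: "card (V0 n) = card Star + card Co" using V0eq disj fS fC by (simp add: card_Un_disjoint)
  have g0: "g_V0 n 0 = (real (card Star) + real (card Co)) / 2"
  proof -
    have "(\<Sum>v\<in>V0 n. real_of_int (v 0)) = (\<Sum>v\<in>V0 n. 1)"
      by (rule sum.cong) (auto simp: V0_D(3))
    then show ?thesis unfolding g_V0_def using cardV by simp
  qed
  have gi: "g_V0 n i = real_of_int (ss Star i) / 2" if "i \<in> {1..<n}" "i \<noteq> x0" for i
  proof -
    have "(\<Sum>v\<in>V0 n. real_of_int (v i)) = real_of_int (ss (V0 n) i)" unfolding ss_def by simp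
    also have "ss (V0 n) i = ss Star i + ss Co i" using V0eq disj fS fC by (simp add: ss_union)
    also have "ss Co i = 0" using ssC that by auto
    finally show ?thesis unfolding g_V0_def by simp
  qed
  have gapAD: "2 * \<rho> + 2 \<le> real A - real D" using gap unfolding A_def D_def .
  have b0: "\<bar>real_of_int (u 0) - (real (card Star) + real (card Co)) / 2\<bar> \<le> \<rho>"
    using box n0 unfolding g0[symmetric] by blast
  have "real (2 * A) \<le> real (card Co)" using cardC by (simp only: of_nat_le_iff)
  then have cardCr: "2 * real A \<le> real (card Co)" by simp
  have cardSr: "real (card Star) = real A + real D" using cardS by simp
  have b0a: "2 * real_of_int (u 0) - (real (card Star) + real (card Co)) \<le> 2 * \<rho>"
    and b0b: "(real (card Star) + real (card Co)) - 2 * real_of_int (u 0) \<le> 2 * \<rho>"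
    using b0 by (simp_all add: abs_le_iff field_simps)
  have kge: "int (card Star) \<le> u 0"
  proof -
    have "real (card Star) \<le> real_of_int (u 0)" using b0a b0b cardSr cardCr gapAD
      by linarith
    then show ?thesis by linarith
  qed
  have kle: "u 0 \<le> int (card Star) + int (card Co)"
  proof -
    have "real_of_int (u 0) \<le> real (card Star) + real (card Co)" using b0a b0b cardSr cardCr gapAD
      by linarith
    then show ?thesis by linarith
  qed
  define t where "t = nat (u 0) - card Star"
  have tC: "t \<le> card Co" unfolding t_def using kle kge by linarith
  have t2: "2 * (t div 2) \<le> card Co" using tC by linarith
  obtain Q where Q: "Q \<subseteq> Co" "\<forall>v\<in>Q. cp x0 v \<in> Q" "card Q = 2 * (t div 2)"
    using pairs[OF fC Cocl t2] by (elim exE conjE) blast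
  have fQ: "finite Q" using Q(1) fC finite_subset by blast
  obtain E where E: "E \<subseteq> Co - Q" "card E = t mod 2"
  proof (cases "t mod 2 = 0")
    case True then show ?thesis using that[of "{}"] by simp
  next
    case False
    have "t = 2 * (t div 2) + t mod 2" by simp
    then have "card Q < card Co" using Q(3) tC False by linarith
    then have "\<not> Co \<subseteq> Q" using card_mono[OF fQ, of Co] by linarith
    then obtain e where "e \<in> Co - Q" by blast
    then show ?thesis using that[of "{e}"] False by simp
  qed
  have fE: "finite E" using E(1) fC finite_subset by blast
  define W where "W = Star \<union> (Q \<union> E)"
  have finW: "finite W" unfolding W_def using fS fQ fE by simp
  have subW: "W \<subseteq> V0 n" unfolding W_def using SV Q(1) E(1) by auto
  have dQE: "Q \<inter> E = {}" using E(1) by auto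
  have dS: "Star \<inter> (Q \<union> E) = {}" using disj Q(1) E(1) by auto
  have "card W = card Star + (card Q + card E)" unfolding W_def
    using fS fQ fE dQE dS by (simp add: card_Un_disjoint)
  also have "\<dots> = card Star + t" using Q(3) E(2) by simp
  also have "\<dots> = nat (u 0)" using kge unfolding t_def by linarith
  finally have cW: "int (card W) = u 0" using kge by linarith
  have ssW: "ss W i \<le> u i" if "i \<in> {1..<n}" "i \<noteq> x0" for i
  proof -
    have "ss W i = ss Star i + (ss Q i + ss E i)" unfolding W_def
      using fS fQ fE dQE dS by (simp add: ss_union)
    also have "ss Q i = 0" using ss_closed[OF fQ Q(2)] that by auto
    also have "ss E i \<le> 1"
    proof -
      have "ss E i \<le> int (card E)" using ss_le_card[OF fE _ that(1)] E(1) SV by blast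
      then show ?thesis using E(2) by linarith
    qed
    finally have le1: "ss W i \<le> int D - int A + 1" using ssS[OF that] by simp
    have "\<bar>real_of_int (u i) - real_of_int (ss Star i) / 2\<bar> \<le> \<rho>" using box that gi[OF that] by auto
    then have "2 * real_of_int (u i) \<ge> (real D - real A) - 2 * \<rho>" using ssS[OF that] by (simp add: abs_le_iff field_simps)
    then have "real_of_int (u i) \<ge> real D - real A + 1" using gapAD by linarith
    then show ?thesis using le1 by linarith
  qed
  show ?thesis using finW subW cW ssW by blast
qed

lemma binom_facts:
  fixes p R :: nat
  assumes "(2*p+4) choose (p+2) > 4 * R * (2*p+5)"
  shows "2 * R < ((2*p+3) choose (p+1)) - ((2*p+3) choose p)"
    "((2*p+3) choose p) \<le> ((2*p+3) choose (p+1))"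
proof -
  define A where "A = (2*p+3) choose (p+1)"
  define D where "D = (2*p+3) choose p"
  have h1: "(2*p+4) choose (p+2) = A + ((2*p+3) choose (p+2))"
    unfolding A_def using binomial_Suc_Suc[of "2*p+3" "p+1"] by (simp add: add.commute)
  have "(2*p+3) choose (p+1) = (2*p+3) choose ((2*p+3) - (p+1))"
    by (rule binomial_symmetric) simp
  then have h2: "(2*p+3) choose (p+2) = A" unfolding A_def
    by (simp add: numeral_eq_Suc)
  have "Suc p * ((2*p+3) choose Suc p) = (2*p+3) * ((2*p+3 - 1) choose p)"
    by (rule binomial_absorption)
  moreover have "((2*p+3) - p) * ((2*p+3) choose p) = (2*p+3) * ((2*p+3 - 1) choose p)"
    by (rule binomial_absorb_comp)
  ultimately have h3: "(p+1) * A = (p+3) * D" unfolding A_def D_def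
    by (simp add: numeral_eq_Suc)
  have m1: "(p+1) * A \<le> (p+3) * A" by (rule mult_le_mono1) simp
  have DA: "D \<le> A"
  proof (rule ccontr)
    assume "\<not> D \<le> A"
    then have "A < D" by simp
    then have "(p+3) * A < (p+3) * D" by simp
    then show False using h3 m1 by linarith
  qed
  have "(p+3) * (A - D) = (p+3) * A - (p+3) * D" by (simp add: diff_mult_distrib2)
  also have "\<dots> = (p+3) * A - (p+1) * A" using h3 by simp
  also have "(p+3) * A = (p+1) * A + 2 * A" by (simp add: algebra_simps)
  finally have e: "(p+3) * (A - D) = 2 * A" by simp
  have "2 * A > 4 * R * (2*p+5)" using assms h1 h2 by simp
  moreover have "(p+3) * (2 * R) \<le> (2*p+5) * (4 * R)" by (intro mult_le_mono) auto
  moreover have "4 * R * (2*p+5) = (2*p+5) * (4 * R)" by simp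
  ultimately have lt: "(p+3) * (2 * R) < (p+3) * (A - D)" using e by linarith
  show "2 * R < A - D"
  proof (rule ccontr)
    assume "\<not> 2 * R < A - D"
    then have "A - D \<le> 2 * R" by simp
    then have "(p+3) * (A - D) \<le> (p+3) * (2 * R)" by (rule mult_le_mono2)
    then show False using lt by simp
  qed
  show "D \<le> A" by (rule DA)
qed

theorem lemma4p2:
  fixes n R :: nat and u :: "nat \<Rightarrow> int"
  assumes "even n" and "n > 0"
    and "R > 0"
    and "(n - 2) choose ((n - 2) div 2) > 4 * R * (n - 1)"
    and "u \<in> lattice_V0 n"
    and "\<forall>i<n. \<bar>real_of_int (u i) - g_V0 n i\<bar> \<le> real R - real n / 2"
  shows "u \<in> P_V0 n"
proof -
  note ev = assms(1) and n0 = assms(2) and R0 = assms(3) and hyp = assms(4) and box = assms(6)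
  from assms(5) obtain c where uc: "u = (\<lambda>i. \<Sum>v\<in>V0 n. c v * v i)"
    unfolding lattice_V0_def by blast
  have uge: "\<forall>i\<ge>n. u i = 0"
  proof (intro allI impI)
    fix i assume "i \<ge> n"
    then show "u i = 0" unfolding uc using V0_D(2) by (simp add: sum.neutral)
  qed
  have usum: "(\<Sum>i<n. u i) = 0"
  proof -
    have "(\<Sum>i<n. u i) = (\<Sum>v\<in>V0 n. \<Sum>i<n. c v * v i)" unfolding uc by (rule sum.swap)
    also have "\<dots> = (\<Sum>v\<in>V0 n. c v * (\<Sum>i<n. v i))" by (simp add: sum_distrib_left)
    also have "\<dots> = 0" using V0_D(4) by (simp add: sum.neutral)
    finally show ?thesis .
  qed
  have upar: "\<forall>i\<in>{1..<n}. even (u i + u 0)"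
  proof
    fix i assume i: "i \<in> {1..<n}"
    have "u i + u 0 = (\<Sum>v\<in>V0 n. c v * (v i + v 0))" unfolding uc
      by (simp add: sum.distrib algebra_simps)
    moreover have "\<forall>v\<in>V0 n. even (c v * (v i + v 0))"
    proof
      fix v assume v: "v \<in> V0 n"
      then have "v i + v 0 = 0 \<or> v i + v 0 = 2" using V0_D(1)[OF v, of i] V0_D(3)[OF v] i by auto
      then have "even (v i + v 0)" by (elim disjE) simp_all
      then show "even (c v * (v i + v 0))" by (rule dvd_mult)
    qed
    ultimately show "even (u i + u 0)" by (simp add: dvd_sum)
  qed
  have m3: "n div 2 \<ge> 3"
  proof (rule ccontr)
    assume "\<not> n div 2 \<ge> 3"
    then have "n = 2 \<or> n = 4" using ev n0 by (auto elim!: evenE)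
    then show False
    proof
      assume "n = 2" then show False using hyp R0 by simp
    next
      assume "n = 4" then show False using hyp R0 by simp
    qed
  qed
  have ne: "u ` {1..<n} \<noteq> {}" using m3 by auto
  obtain x0 where x0: "x0 \<in> {1..<n}" "u x0 = Max (u ` {1..<n})"
  proof -
    have "Max (u ` {1..<n}) \<in> u ` {1..<n}" using Max_in[OF _ ne] by simp
    then show ?thesis using that by auto
  qed
  have umax: "\<forall>j\<in>{1..<n}. u j \<le> u x0"
  proof
    fix j assume "j \<in> {1..<n}"
    then have "u j \<le> Max (u ` {1..<n})" by (intro Max_ge) auto
    then show "u j \<le> u x0" using x0(2) by simp
  qed
  obtain k where k: "n = 2 * k" using ev by (elim evenE)
  define p where "p = k - 3"
  have p: "n = 2 * p + 6" using k m3 unfolding p_def by simp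
  have bf: "2 * R < ((2*p+3) choose (p+1)) - ((2*p+3) choose p)" "((2*p+3) choose p) \<le> ((2*p+3) choose (p+1))"
  proof -
    have "(2*p+4) choose (p+2) > 4 * R * (2*p+5)" using hyp p by (simp add: add.commute)
    then show "2 * R < ((2*p+3) choose (p+1)) - ((2*p+3) choose p)" "((2*p+3) choose p) \<le> ((2*p+3) choose (p+1))"
      using binom_facts by blast+
  qed
  have gap: "2 * (real R - real n / 2) + 2 \<le> real ((n-3) choose (n div 2 - 2)) - real ((n-3) choose (n div 2 - 3))"
  proof -
    have e1: "n - 3 = 2*p+3" "n div 2 - 2 = p+1" "n div 2 - 3 = p" using p by auto
    have "real (2 * R) < real (((2*p+3) choose (p+1)) - ((2*p+3) choose p))" using bf(1) by (simp only: of_nat_less_iff)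
    then have "2 * real R < real ((2*p+3) choose (p+1)) - real ((2*p+3) choose p)" using bf(2) by (simp add: of_nat_diff)
    moreover have "real n = 2 * real p + 6" using p by simp
    moreover have "2 * (real R - real n / 2) = 2 * real R - real n" by simp
    ultimately show ?thesis unfolding e1 by linarith
  qed
  obtain W where W: "finite W" "W \<subseteq> V0 n" "int (card W) = u 0" "\<forall>i\<in>{1..<n}. i \<noteq> x0 \<longrightarrow> ss W i \<le> u i"
    using base[OF ev n0 m3 x0(1) box gap] by blast
  show ?thesis using greedy[OF n0 x0(1) umax usum uge upar W] .
qed

end
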